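(* Let $K$ be a field of characteristic $0$ with henselian valuation ring $A$, maximal ideal $\mathfrak{m}_A$, valuation $v$ and residue field of characteristic $p>0$, containing a primitive $p$-th root of unity $\zeta$; put $\mathfrak{z}=\zeta-1$. Let $L|K$ be a Kummer extension of degree $p$ with defect $p$, $B$ the integral closure of $A$ in $L$, and let $\mathscr{S}=\{\alpha\in L: \alpha^p=h\in A^\times,\ h-1\in\mathfrak{m}_A,\ K(\alpha)=L\}$. For $\alpha\in\mathscr{S}$ let $\alpha'=\gamma_\alpha(\alpha-1)/\mathfrak{z}$ with $\gamma_\alpha\in A$ chosen so that $\alpha'\in B^\times$. If $\alpha_1,\alpha_2\in\mathscr{S}$ satisfy $v(\alpha_1-1)\le v(\alpha_2-1)$, then $A[\alpha_1']\subset A[\alpha_2']$.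
   Context: $v$ also denotes its unique extension to $L$. Defect $p$ means $(v(L^\times):v(K^\times))=1$ and the residue extension is trivial, although $[L:K]=p$. *)

theory Defs
  imports "HOL-Computational_Algebra.Polynomial"
begin

text \<open>The big field L is the whole type 'a (a field of characteristic 0);
  the subfield K is a subset of it. The (unique) extension of the valuation v to L is
  represented by its valuation ring Ov of L; the valuation ring of K is A = Ov \<inter> K.\<close>

definition is_subring :: "'a::field set \<Rightarrow> bool" where
  "is_subring R \<longleftrightarrow> 0 \<in> R \<and> 1 \<in> R \<and>
     (\<forall>x\<in>R. \<forall>y\<in>R. x + y \<in> R \<and> x - y \<in> R \<and> x * y \<in> R)"

definition is_subfield :: "'a::field set \<Rightarrow> bool" where
  "is_subfield F \<longleftrightarrow> is_subring F \<and> (\<forall>x\<in>F. x \<noteq> 0 \<longrightarrow> inverse x \<in> F)"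

definition is_valuation_ring :: "'a::field set \<Rightarrow> bool" where
  "is_valuation_ring Ov \<longleftrightarrow> is_subring Ov \<and> (\<forall>x. x \<noteq> 0 \<longrightarrow> x \<in> Ov \<or> inverse x \<in> Ov)"

definition units_in :: "'a::field set \<Rightarrow> 'a set" where
  "units_in R = {x \<in> R. x \<noteq> 0 \<and> inverse x \<in> R}"

definition max_ideal :: "'a::field set \<Rightarrow> 'a set" where
  "max_ideal R = R - units_in R"

text \<open>v(x) \<le> v(y) for the valuation v with valuation ring Ov.\<close>
definition val_le :: "'a::field set \<Rightarrow> 'a \<Rightarrow> 'a \<Rightarrow> bool" where
  "val_le Ov x y \<longleftrightarrow> (if x = 0 then y = 0 else y / x \<in> Ov)"

definition henselian :: "'a::field set \<Rightarrow> 'a set \<Rightarrow> bool" where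
  "henselian A m \<longleftrightarrow> (\<forall>f a. (\<forall>i. coeff f i \<in> A) \<and> lead_coeff f = 1 \<and> a \<in> A \<and>
       poly f a \<in> m \<and> poly (pderiv f) a \<notin> m \<longrightarrow> (\<exists>b\<in>A. poly f b = 0 \<and> b - a \<in> m))"

definition gen_field :: "'a::field set \<Rightarrow> 'a \<Rightarrow> 'a set" where
  "gen_field K a = \<Inter>{F. is_subfield F \<and> K \<subseteq> F \<and> a \<in> F}"

definition ext_degree_is :: "'a::field set \<Rightarrow> nat \<Rightarrow> bool" where
  "ext_degree_is K n \<longleftrightarrow> (\<exists>b :: nat \<Rightarrow> 'a.
     (\<forall>c. (\<forall>i<n. c i \<in> K) \<and> (\<Sum>i<n. c i * b i) = 0 \<longrightarrow> (\<forall>i<n. c i = 0)) \<and>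
     (\<forall>x. \<exists>c. (\<forall>i<n. c i \<in> K) \<and> x = (\<Sum>i<n. c i * b i)))"

definition integral_closure :: "'a::field set \<Rightarrow> 'a set" where
  "integral_closure A = {x. \<exists>f. (\<forall>i. coeff f i \<in> A) \<and> lead_coeff f = 1 \<and> poly f x = 0}"

definition adjoin :: "'a::field set \<Rightarrow> 'a \<Rightarrow> 'a set" where
  "adjoin A x = {poly q x | q. \<forall>i. coeff q i \<in> A}"

definition kummer_gens :: "'a::field set \<Rightarrow> 'a set \<Rightarrow> nat \<Rightarrow> 'a set" where
  "kummer_gens K Ov p = {\<alpha>. \<exists>h. \<alpha> ^ p = h \<and> h \<in> units_in (Ov \<inter> K) \<and>
       h - 1 \<in> max_ideal Ov \<inter> K \<and> gen_field K \<alpha> = UNIV}"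

end

theory Submission
  imports Defs "HOL-Algebra.Algebraic_Closure_Type"
begin

abbreviation RR where "RR \<equiv> (ring_of_type_algebra :: 'a::field ring)"

lemma RR_simps[simp]:
  "carrier (RR::'a::field ring) = UNIV"
  "x \<otimes>\<^bsub>(RR::'a::field ring)\<^esub> y = x * y"
  "x \<oplus>\<^bsub>(RR::'a::field ring)\<^esub> y = x + y"
  "\<zero>\<^bsub>(RR::'a::field ring)\<^esub> = 0"
  "\<one>\<^bsub>(RR::'a::field ring)\<^esub> = 1"
  by (simp_all add: ring_of_type_algebra_def)

lemma RR_field: "field (RR::'a::field ring)" by auto

lemma RR_neg[simp]: "\<ominus>\<^bsub>(RR::'a::field ring)\<^esub> x = - x"
proof -
  interpret R: field "RR::'a ring" by (rule RR_field)
  show ?thesis by (rule R.minus_equality) auto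
qed

lemma RR_inv: "(x::'a::field) \<noteq> 0 \<Longrightarrow> inv\<^bsub>(RR::'a::field ring)\<^esub> x = inverse x"
proof -
  interpret R: field "RR::'a ring" by (rule RR_field)
  assume "x \<noteq> 0" thus ?thesis by (intro R.comm_inv_char) auto
qed

lemma RR_pow[simp]: "x [^]\<^bsub>(RR::'a::field ring)\<^esub> (n::nat) = x ^ n"
proof -
  interpret R: field "RR::'a ring" by (rule RR_field)
  show ?thesis by (induct n) (auto simp: mult.commute)
qed

lemma RR_combine:
  "length Ks = length Us \<Longrightarrow>
   ring.combine (RR::'a::field ring) Ks Us = (\<Sum>i<length Us. Ks!i * Us!i)"
proof (induct Ks Us rule: list_induct2)
  case Nil
  interpret R: field "RR::'a ring" by (rule RR_field)
  show ?case by simp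
next
  case (Cons k Ks u Us)
  interpret R: field "RR::'a ring" by (rule RR_field)
  show ?case using Cons by (simp only: length_Cons sum.lessThan_Suc_shift) simp
qed

lemma subfield_RR: "is_subfield K \<Longrightarrow> subfield K (RR::'a::field ring)"
proof -
  interpret R: field "RR::'a ring" by (rule RR_field)
  assume K: "is_subfield K"
  have "subring K RR"
    apply (rule R.subringI)
    using K unfolding is_subfield_def is_subring_def by (auto simp: diff_0[symmetric] simp del: diff_0)
  then show ?thesis
    apply (rule R.subfieldI')
    using K unfolding is_subfield_def by (auto simp: RR_inv)
qed

lemma subfield_RR_rev: "subfield F (RR::'a::field ring) \<Longrightarrow> is_subfield F"
proof -
  interpret R: field "RR::'a ring" by (rule RR_field)
  assume F: "subfield F RR"
  note E = subringE[OF subfieldE(1)[OF F], simplified]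
  have "x - y \<in> F" if "x \<in> F" "y \<in> F" for x y
    using E(5)[OF that(2)] E(7)[OF that(1)] by (simp add: diff_conv_add_uminus del: add_uminus_conv_diff)
  moreover have "inverse x \<in> F" if "x \<in> F" "x \<noteq> 0" for x
    using R.subfield_m_inv(1)[OF F, of x] that by (auto simp: RR_inv)
  ultimately show ?thesis unfolding is_subfield_def is_subring_def using E by auto
qed

lemma RR_combine_gen:
  "ring.combine (RR::'a::field ring) Ks Us = (\<Sum>i<min (length Ks) (length Us). Ks!i * Us!i)"
proof (induct Ks arbitrary: Us)
  case Nil
  interpret R: field "RR::'a ring" by (rule RR_field)
  show ?case by simp
next
  case (Cons k Ks Us)
  interpret R: field "RR::'a ring" by (rule RR_field)
  show ?case
  proof (cases Us)
    case Nil thus ?thesis by simp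
  next
    case (Cons u Us')
    show ?thesis using Cons.hyps[of Us'] unfolding Cons
      by (simp only: length_Cons min_Suc_Suc sum.lessThan_Suc_shift) simp
  qed
qed

lemma exp_base_nth:
  "j < n \<Longrightarrow> ring.exp_base (RR::'a::field ring) a n ! j = a ^ (n - Suc j)"
proof -
  interpret R: field "RR::'a ring" by (rule RR_field)
  assume "j < n" thus ?thesis by (simp add: R.exp_base_def rev_nth)
qed

lemma exp_base_length: "length (ring.exp_base (RR::'a::field ring) a n) = n"
proof -
  interpret R: field "RR::'a ring" by (rule RR_field)
  show ?thesis by (simp add: R.exp_base_def)
qed

lemma combine_exp_base:
  assumes "length Ks = n"
  shows "ring.combine (RR::'a::field ring) Ks (ring.exp_base RR a n) = (\<Sum>i<n. Ks ! (n - Suc i) * a ^ i)"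
proof -
  have "ring.combine (RR::'a::field ring) Ks (ring.exp_base RR a n) = (\<Sum>j<n. Ks!j * a ^ (n - Suc j))"
    using assms by (simp add: RR_combine_gen exp_base_length exp_base_nth)
  also have "\<dots> = (\<Sum>i<n. Ks ! (n - Suc (n - Suc i)) * a ^ (n - Suc i))"
    by (rule sum.cong) (auto simp: Suc_diff_Suc)
  also have "\<dots> = (\<Sum>i<n. Ks ! (n - Suc i) * a ^ i)"
    by (rule sum.nat_diff_reindex)
  finally show ?thesis .
qed

lemma powers_basis:
  fixes K :: "'a::field set" and a :: 'a
  assumes K: "is_subfield K" and deg: "ext_degree_is K p" and gen: "gen_field K a = UNIV"
  shows "\<forall>c. (\<forall>i<p. c i \<in> K) \<and> (\<Sum>i<p. c i * a^i) = 0 \<longrightarrow> (\<forall>i<p. c i = 0)"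
    and "\<forall>x. \<exists>c. (\<forall>i<p. c i \<in> K) \<and> x = (\<Sum>i<p. c i * a^i)"
proof -
  interpret R: field "RR::'a ring" by (rule RR_field)
  have Ks: "subfield K RR" using subfield_RR[OF K] .
  obtain b where b1: "\<And>c. (\<forall>i<p. c i \<in> K) \<Longrightarrow> (\<Sum>i<p. c i * b i) = 0 \<Longrightarrow> (\<forall>i<p. c i = 0)"
    and b2: "\<And>x. \<exists>c. (\<forall>i<p. c i \<in> K) \<and> x = (\<Sum>i<p. c i * b i)"
    using deg unfolding ext_degree_is_def by blast
  define Us where "Us = map b [0..<p]"
  have lenUs: "length Us = p" by (simp add: Us_def)
  have indep: "R.independent K Us"
  proof (rule R.trivial_combine_imp_independent[OF Ks])
    show "set Us \<subseteq> carrier RR" by simp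
    fix Ks' assume Ks': "set Ks' \<subseteq> K" and c0: "R.combine Ks' Us = \<zero>\<^bsub>RR\<^esub>"
    define c where "c i = (if i < length Ks' then Ks'!i else 0)" for i
    have cK: "\<forall>i<p. c i \<in> K" using Ks' K unfolding c_def is_subfield_def is_subring_def
      by (auto simp: nth_mem subsetD)
    have "R.combine Ks' Us = (\<Sum>i<min (length Ks') p. Ks'!i * b i)"
      by (simp add: RR_combine_gen lenUs Us_def)
    also have "\<dots> = (\<Sum>i<p. c i * b i)"
      by (rule sum.mono_neutral_cong_left) (auto simp: c_def)
    finally have "(\<Sum>i<p. c i * b i) = 0" using c0 by simp
    hence "\<forall>i<p. c i = 0" using b1[OF cK] by blast
    thus "set (take (length Us) Ks') \<subseteq> {\<zero>\<^bsub>RR\<^esub>}"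
      by (auto simp: lenUs in_set_conv_nth c_def) metis
  qed
  have span: "R.Span K Us = UNIV"
  proof -
    have "x \<in> R.Span K Us" for x
    proof -
      obtain c where c: "\<forall>i<p. c i \<in> K" "x = (\<Sum>i<p. c i * b i)" using b2 by blast
      have "x = R.combine (map c [0..<p]) Us" using c by (simp add: RR_combine Us_def)
      moreover have "set (map c [0..<p]) \<subseteq> K" using c by auto
      moreover have "set Us \<subseteq> carrier RR" by simp
      ultimately show ?thesis
        using R.Span_mem_iff_length_version[OF Ks, of Us x] lenUs
        by (metis length_map diff_zero length_upt)
    qed
    thus ?thesis by auto
  qed
  have dim: "R.dimension p K UNIV"
    using R.dimensionI[OF Ks indep span] lenUs by simp
  have alg: "(R.algebraic over K) a"
    using R.finite_dimension_imp_algebraic[OF Ks R.carrier_is_subring, of a] R.finite_dimensionI[of p K "carrier RR"] dim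
    by simp
  have se: "subfield (R.simple_extension K a) RR"
    using R.simple_extension_is_subfield[OF Ks, of a] alg by simp
  have seU: "R.simple_extension K a = UNIV"
  proof -
    have "gen_field K a \<subseteq> R.simple_extension K a"
      unfolding gen_field_def
      apply (rule Inter_lower)
      using subfield_RR_rev[OF se] R.simple_extension_incl[of K a] R.simple_extension_mem[OF subfieldE(1)[OF Ks], of a]
      by auto
    thus ?thesis using gen by auto
  qed
  have "R.dimension (Polynomials.degree (R.Irr K a)) K UNIV"
    using R.dimension_simple_extension[OF Ks _ alg] seU by simp
  hence degp: "Polynomials.degree (R.Irr K a) = p" using R.dimension_is_inj[OF Ks _ dim] by blast
  have indep2: "R.independent K (R.exp_base a p)"
    using R.exp_base_independent[OF Ks _ alg] degp by simp
  have span2: "R.Span K (R.exp_base a p) = UNIV"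
    using R.Span_exp_base[OF Ks _ alg] degp seU by simp
  show "\<forall>c. (\<forall>i<p. c i \<in> K) \<and> (\<Sum>i<p. c i * a^i) = 0 \<longrightarrow> (\<forall>i<p. c i = 0)"
  proof (intro allI impI, elim conjE)
    fix c :: "nat \<Rightarrow> 'a" and i assume cK: "\<forall>i<p. c i \<in> K" and c0: "(\<Sum>i<p. c i * a^i) = 0" and ip: "i < p"
    define Ks' where "Ks' = map (\<lambda>j. c (p - Suc j)) [0..<p]"
    have len: "length Ks' = p" by (simp add: Ks'_def)
    have "R.combine Ks' (R.exp_base a p) = (\<Sum>i<p. c i * a^i)"
      unfolding combine_exp_base[OF len]
      by (rule sum.cong) (auto simp: Ks'_def Suc_diff_Suc)
    hence "R.combine Ks' (R.exp_base a p) = \<zero>\<^bsub>RR\<^esub>" using c0 by simp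
    moreover have "set Ks' \<subseteq> K" using cK by (auto simp: Ks'_def)
    ultimately have "set (take (length (R.exp_base a p)) Ks') \<subseteq> {\<zero>\<^bsub>RR\<^esub>}"
      by (intro R.independent_imp_trivial_combine[OF Ks indep2])
    hence "set (take p Ks') \<subseteq> {0}" by (simp add: exp_base_length)
    hence "set Ks' \<subseteq> {0}" using len by simp
    moreover have "Ks' ! (p - Suc i) \<in> set Ks'" using ip len by (intro nth_mem) simp
    ultimately have "Ks' ! (p - Suc i) = 0" by blast
    thus "c i = 0" using ip by (simp add: Ks'_def Suc_diff_Suc)
  qed
  show "\<forall>x. \<exists>c. (\<forall>i<p. c i \<in> K) \<and> x = (\<Sum>i<p. c i * a^i)"
  proof
    fix x :: 'a
    have "x \<in> R.Span K (R.exp_base a p)" using span2 by simp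
    moreover have cU: "set (R.exp_base a p) \<subseteq> carrier RR" by simp
    ultimately have "\<exists>Ks'. set Ks' \<subseteq> K \<and> length Ks' = length (R.exp_base a p) \<and> x = R.combine Ks' (R.exp_base a p)"
      using R.Span_mem_iff_length_version[OF Ks cU, of x] by blast
    then obtain Ks' where Ks': "set Ks' \<subseteq> K" "length Ks' = p" "x = R.combine Ks' (R.exp_base a p)"
      unfolding exp_base_length by blast
    show "\<exists>c. (\<forall>i<p. c i \<in> K) \<and> x = (\<Sum>i<p. c i * a^i)"
      apply (rule exI[of _ "\<lambda>i. Ks' ! (p - Suc i)"])
      using Ks' combine_exp_base[OF Ks'(2)] by (auto simp: nth_mem subsetD)
  qed
qed

lemma subring_sum:
  assumes S: "is_subring S" and A: "finite A" and f: "\<And>x. x \<in> A \<Longrightarrow> f x \<in> S"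
  shows "sum f A \<in> S"
  using A f by (induct A rule: finite_induct) (use S in \<open>auto simp: is_subring_def\<close>)

lemma subring_pow: "is_subring S \<Longrightarrow> x \<in> S \<Longrightarrow> x ^ n \<in> S"
  by (induct n) (auto simp: is_subring_def)

definition pin :: "'a::field set \<Rightarrow> 'a poly \<Rightarrow> bool" where
  "pin S f \<longleftrightarrow> (\<forall>i. Polynomial.coeff f i \<in> S)"

lemma pin_mult: "is_subring S \<Longrightarrow> pin S f \<Longrightarrow> pin S g \<Longrightarrow> pin S (f * g)"
  unfolding pin_def coeff_mult
  by (auto intro!: subring_sum) (auto simp: is_subring_def)

lemma pin_pow: "is_subring S \<Longrightarrow> pin S f \<Longrightarrow> pin S (f ^ n)"
proof (induct n)
  case 0 thus ?case by (auto simp: pin_def coeff_1 is_subring_def)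
next
  case (Suc n) thus ?case using pin_mult[of S f "f ^ n"] by simp
qed

lemma pin_diff: "is_subring S \<Longrightarrow> pin S f \<Longrightarrow> pin S g \<Longrightarrow> pin S (f - g)"
  unfolding pin_def by (auto simp: is_subring_def)

lemma pin_const: "is_subring S \<Longrightarrow> a \<in> S \<Longrightarrow> pin S [:a:]"
  unfolding pin_def by (auto simp: is_subring_def coeff_pCons split: nat.splits)

lemma pin_sum_monom: "is_subring S \<Longrightarrow> (\<And>i. i < n \<Longrightarrow> c i \<in> S) \<Longrightarrow> pin S (\<Sum>i<n. Polynomial.monom (c i) i)"
  unfolding pin_def coeff_sum
  by (auto intro!: subring_sum) (auto simp: is_subring_def)

lemma reduce_poly:
  fixes G :: "'a::field poly"
  assumes p: "p > 0" and y: "y ^ p = h"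
  shows "poly G y = (\<Sum>i<p. (\<Sum>n\<le>Polynomial.degree G. if n mod p = i then Polynomial.coeff G n * h ^ (n div p) else 0) * y ^ i)"
proof -
  have yn: "y ^ n = h ^ (n div p) * y ^ (n mod p)" for n
  proof -
    have "y ^ n = y ^ (n mod p + p * (n div p))" by simp
    also have "\<dots> = y ^ (n mod p) * (y ^ p) ^ (n div p)" by (simp only: power_add power_mult)
    finally show ?thesis using y by simp
  qed
  have "(\<Sum>i<p. (\<Sum>n\<le>Polynomial.degree G. if n mod p = i then Polynomial.coeff G n * h ^ (n div p) else 0) * y ^ i)
      = (\<Sum>i<p. \<Sum>n\<le>Polynomial.degree G. (if n mod p = i then Polynomial.coeff G n * h ^ (n div p) * y ^ i else 0))"
    unfolding sum_distrib_right by (intro sum.cong refl) simp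
  also have "\<dots> = (\<Sum>n\<le>Polynomial.degree G. \<Sum>i<p. (if n mod p = i then Polynomial.coeff G n * h ^ (n div p) * y ^ i else 0))"
    by (rule sum.swap)
  also have "\<dots> = (\<Sum>n\<le>Polynomial.degree G. Polynomial.coeff G n * y ^ n)"
  proof (intro sum.cong refl)
    fix n
    have "(\<Sum>i<p. (if n mod p = i then Polynomial.coeff G n * h ^ (n div p) * y ^ i else 0))
        = Polynomial.coeff G n * h ^ (n div p) * y ^ (n mod p)"
      using p by (simp add: sum.delta)
    also have "\<dots> = Polynomial.coeff G n * y ^ n" by (simp only: yn[of n] mult.assoc)
    finally show "(\<Sum>i<p. (if n mod p = i then Polynomial.coeff G n * h ^ (n div p) * y ^ i else 0))
        = Polynomial.coeff G n * y ^ n" .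
  qed
  also have "\<dots> = poly G y" by (simp add: poly_altdef)
  finally show ?thesis ..
qed

lemma roots_of_unity:
  fixes \<zeta> w :: "'a::field"
  assumes p: "p > 0" and z: "\<zeta> ^ p = 1" "\<forall>k. 0 < k \<and> k < p \<longrightarrow> \<zeta> ^ k \<noteq> 1"
    and w: "w ^ p = 1"
  shows "\<exists>m<p. w = \<zeta> ^ m"
    and "\<And>i j. i < p \<Longrightarrow> j < p \<Longrightarrow> \<zeta> ^ i = \<zeta> ^ j \<Longrightarrow> i = j"
proof -
  have z0: "\<zeta> \<noteq> 0" using z p by (auto simp: power_0_left)
  show inj: "\<And>i j. i < p \<Longrightarrow> j < p \<Longrightarrow> \<zeta> ^ i = \<zeta> ^ j \<Longrightarrow> i = j"
  proof -
    have *: "i = j" if "i \<le> j" "i < p" "j < p" "\<zeta> ^ i = \<zeta> ^ j" for i j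
    proof (rule ccontr)
      assume "i \<noteq> j"
      hence "0 < j - i" "j - i < p" using that by auto
      moreover have "\<zeta> ^ (j - i) = 1"
      proof -
        have "\<zeta> ^ j = \<zeta> ^ i * \<zeta> ^ (j - i)" using that(1) by (simp add: power_add[symmetric])
        thus ?thesis using that(4) z0 by simp
      qed
      ultimately show False using z(2) by blast
    qed
    fix i j assume "i < p" "j < p" "\<zeta> ^ i = \<zeta> ^ j"
    thus "i = j" using *[of i j] *[of j i] by (cases "i \<le> j") auto
  qed
  show "\<exists>m<p. w = \<zeta> ^ m"
  proof (rule ccontr)
    assume nw: "\<not> (\<exists>m<p. w = \<zeta> ^ m)"
    define P :: "'a poly" where "P = Polynomial.monom 1 p - 1"
    have degP: "Polynomial.degree P \<le> p" unfolding P_def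
      by (intro degree_diff_le degree_monom_le) simp
    have "Polynomial.coeff P p = 1" using p by (simp add: P_def)
    hence P0: "P \<noteq> 0" by auto
    have zm: "(\<zeta>^m)^p = 1" for m by (metis power_mult mult.commute z(1) power_one)
    have sub: "insert w ((\<lambda>m. \<zeta> ^ m) ` {..<p}) \<subseteq> {x. poly P x = 0}"
      using w zm by (auto simp: P_def poly_monom)
    have "card (insert w ((\<lambda>m. \<zeta> ^ m) ` {..<p})) = Suc p"
      using nw inj by (subst card_insert_disjoint) (auto simp: card_image inj_on_def)
    moreover have "card (insert w ((\<lambda>m. \<zeta> ^ m) ` {..<p})) \<le> card {x. poly P x = 0}"
      by (rule card_mono[OF poly_roots_finite[OF P0] sub])
    ultimately show False using card_poly_roots_bound[OF P0] degP by simp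
  qed
qed

lemma kummer_pair:
  fixes K :: "'a::field set" and a1 a2 \<zeta> h1 h2 :: 'a
  assumes K: "is_subfield K" and deg: "ext_degree_is K p" and p: "p > 0"
    and z: "\<zeta> \<in> K" "\<zeta>^p = 1" "\<forall>k. 0<k \<and> k<p \<longrightarrow> \<zeta>^k \<noteq> 1"
    and a2: "a2^p = h2" "h2 \<in> K" "gen_field K a2 = UNIV"
    and a1: "a1^p = h1" "h1 \<in> K" "h1 \<noteq> 0"
  shows "\<exists>d\<in>K. \<exists>k. a1 = d * a2^k"
proof -
  have S: "is_subring K" using K by (simp add: is_subfield_def)
  note B1 = powers_basis(1)[OF K deg a2(3)] and B2 = powers_basis(2)[OF K deg a2(3)]
  obtain c where cK: "\<forall>i<p. c i \<in> K" and ac: "a1 = (\<Sum>i<p. c i * a2^i)" using B2 by blast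
  define F where "F = (\<Sum>i<p. Polynomial.monom (c i) i)"
  have polyF: "poly F y = (\<Sum>i<p. c i * y^i)" for y by (simp add: F_def poly_sum poly_monom)
  define G where "G = F^p - [:h1:]"
  have pinF: "pin K F" unfolding F_def using pin_sum_monom[OF S, of p c] cK by blast
  have pinG: "pin K G" unfolding G_def
    by (intro pin_diff[OF S] pin_pow[OF S] pinF pin_const[OF S] a1(2))
  define r where "r i = (\<Sum>n\<le>Polynomial.degree G. if n mod p = i then Polynomial.coeff G n * h2^(n div p) else 0)" for i
  have rK: "\<forall>i<p. r i \<in> K"
  proof (intro allI impI)
    fix i show "r i \<in> K" unfolding r_def
      apply (rule subring_sum[OF S], simp)
      using pinG subring_pow[OF S a2(2)] S unfolding pin_def is_subring_def by auto
  qed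
  have "poly G a2 = 0" using a1(1) ac by (simp add: G_def polyF)
  hence "(\<Sum>i<p. r i * a2^i) = 0" using reduce_poly[OF p a2(1), of G] by (simp add: r_def)
  hence r0: "\<forall>i<p. r i = 0" using B1 rK by blast
  have zp: "(\<zeta>*a2)^p = h2" by (simp add: power_mult_distrib z(2) a2(1))
  have "poly G (\<zeta>*a2) = 0" using reduce_poly[OF p zp, of G] r0 by (simp add: r_def[symmetric])
  hence bp: "(poly F (\<zeta>*a2))^p = a1^p" by (simp add: G_def a1(1))
  have a1ne: "a1 \<noteq> 0" using a1 p by auto
  have "(poly F (\<zeta>*a2) / a1)^p = 1" using bp a1ne by (simp add: power_divide)
  then obtain m where m: "m<p" "poly F (\<zeta>*a2)/a1 = \<zeta>^m" using roots_of_unity(1)[OF p z(2,3)] by blast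
  hence bm: "poly F (\<zeta>*a2) = \<zeta>^m * a1" using a1ne by (simp add: field_simps)
  have "(\<Sum>i<p. (c i * \<zeta>^i - \<zeta>^m * c i) * a2^i) = poly F (\<zeta>*a2) - \<zeta>^m * a1"
    unfolding polyF ac by (simp add: sum_subtractf sum_distrib_left algebra_simps power_mult_distrib)
  hence "(\<Sum>i<p. (c i * \<zeta>^i - \<zeta>^m * c i) * a2^i) = 0" using bm by simp
  moreover have "\<forall>i<p. c i * \<zeta>^i - \<zeta>^m * c i \<in> K"
    using cK z(1) subring_pow[OF S z(1)] S unfolding is_subring_def by auto
  ultimately have cz: "\<forall>i<p. c i * \<zeta>^i - \<zeta>^m * c i = 0"
    using B1[rule_format, of "\<lambda>i. c i * \<zeta>^i - \<zeta>^m * c i"] by blast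
  have c0: "c i = 0" if "i < p" "i \<noteq> m" for i
  proof -
    have "\<zeta>^i \<noteq> \<zeta>^m" using roots_of_unity(2)[OF p z(2,3), of 1 i m] that m by auto
    moreover have "c i * (\<zeta>^i - \<zeta>^m) = 0" using cz that by (simp add: algebra_simps)
    ultimately show ?thesis by simp
  qed
  have "a1 = (\<Sum>i<p. if i = m then c m * a2^m else 0)"
    unfolding ac by (rule sum.cong) (auto simp: c0)
  also have "\<dots> = c m * a2^m" using m by simp
  finally show ?thesis using cK m by blast
qed

lemma VR_sub: "is_valuation_ring Ov \<Longrightarrow> is_subring Ov"
  by (simp add: is_valuation_ring_def)

lemma VR_pow:
  assumes V: "is_valuation_ring Ov" and p: "p > 0" and z: "z ^ p \<in> Ov"
  shows "z \<in> Ov"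
proof (rule ccontr)
  assume nz: "z \<notin> Ov"
  have S: "is_subring Ov" using V by (simp add: is_valuation_ring_def)
  have "z \<noteq> 0" using nz S by (auto simp: is_subring_def)
  hence w: "inverse z \<in> Ov" using V nz unfolding is_valuation_ring_def by blast
  have "z = z ^ p * (inverse z) ^ (p - 1)"
    using p \<open>z \<noteq> 0\<close> by (cases p) (auto simp: power_inverse field_simps)
  moreover have "z ^ p * (inverse z) ^ (p - 1) \<in> Ov"
    using z subring_pow[OF S w] S unfolding is_subring_def by auto
  ultimately show False using nz by simp
qed

lemma integral_in_VR:
  assumes V: "is_valuation_ring Ov" and x: "x \<in> integral_closure (Ov \<inter> K)"
  shows "x \<in> Ov"
proof (rule ccontr)
  assume nx: "x \<notin> Ov"
  have S: "is_subring Ov" using V by (simp add: is_valuation_ring_def)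
  obtain f where f: "\<forall>i. Polynomial.coeff f i \<in> Ov \<inter> K" "Polynomial.lead_coeff f = 1" "poly f x = 0"
    using x unfolding integral_closure_def by blast
  have "x \<noteq> 0" using nx S by (auto simp: is_subring_def)
  hence w: "inverse x \<in> Ov" using V nx unfolding is_valuation_ring_def by blast
  define n where "n = Polynomial.degree f"
  have n0: "n > 0"
  proof (rule ccontr)
    assume "\<not> n > 0"
    hence "n = 0" by simp
    hence "poly f x = Polynomial.coeff f 0" by (simp add: poly_altdef n_def)
    thus False using f(2,3) \<open>n = 0\<close> n_def by simp
  qed
  have "0 = (\<Sum>i\<le>n. Polynomial.coeff f i * x ^ i)" using f(3) by (simp add: poly_altdef n_def)
  also have "\<dots> = (\<Sum>i<n. Polynomial.coeff f i * x ^ i) + x ^ n"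
    using f(2) by (simp add: lessThan_Suc_atMost[symmetric] n_def)
  finally have xn: "x ^ n = - (\<Sum>i<n. Polynomial.coeff f i * x ^ i)" by (simp add: eq_neg_iff_add_eq_0 add.commute)
  have "x = x ^ n * (inverse x) ^ (n - 1)"
    using n0 \<open>x \<noteq> 0\<close> by (cases n) (auto simp: power_inverse field_simps)
  also have "\<dots> = - (\<Sum>i<n. Polynomial.coeff f i * (x ^ i * (inverse x) ^ (n - 1)))"
    unfolding xn by (simp add: sum_distrib_right mult.assoc)
  also have "\<dots> = - (\<Sum>i<n. Polynomial.coeff f i * (inverse x) ^ (n - 1 - i))"
  proof -
    have "x ^ i * (inverse x) ^ (n - 1) = (inverse x) ^ (n - 1 - i)" if "i < n" for i
    proof -
      have "(inverse x) ^ (n - 1) = (inverse x) ^ i * (inverse x) ^ (n - 1 - i)"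
        using that by (simp add: power_add[symmetric])
      thus ?thesis using \<open>x \<noteq> 0\<close> by (simp add: power_inverse field_simps)
    qed
    thus ?thesis by (auto intro!: sum.cong)
  qed
  finally have "x = - (\<Sum>i<n. Polynomial.coeff f i * (inverse x) ^ (n - 1 - i))" .
  moreover have "(\<Sum>i<n. Polynomial.coeff f i * (inverse x) ^ (n - 1 - i)) \<in> Ov"
    apply (rule subring_sum[OF S], simp)
    using f(1) subring_pow[OF S w] S unfolding is_subring_def by auto
  ultimately have "x \<in> Ov" using S unfolding is_subring_def by (metis diff_0)
  thus False using nx by simp
qed

lemma pin_add: "is_subring S \<Longrightarrow> pin S f \<Longrightarrow> pin S g \<Longrightarrow> pin S (f + g)"
  unfolding pin_def by (auto simp: is_subring_def)

lemma adj_const: "is_subring A \<Longrightarrow> a \<in> A \<Longrightarrow> a \<in> adjoin A x"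
  unfolding adjoin_def using pin_const[of A a] unfolding pin_def by (auto intro!: exI[of _ "[:a:]"])

lemma adj_x: "is_subring A \<Longrightarrow> x \<in> adjoin A x"
  unfolding adjoin_def
  by (auto intro!: exI[of _ "[:0,1:]"] simp: coeff_pCons is_subring_def split: nat.splits)

lemma adj_add:
  assumes A: "is_subring A" and y: "y \<in> adjoin A x" and z: "z \<in> adjoin A x"
  shows "y + z \<in> adjoin A x"
proof -
  obtain q1 where q1: "pin A q1" "y = poly q1 x" using y unfolding adjoin_def pin_def by blast
  obtain q2 where q2: "pin A q2" "z = poly q2 x" using z unfolding adjoin_def pin_def by blast
  have "pin A (q1 + q2)" by (rule pin_add[OF A q1(1) q2(1)])
  moreover have "y + z = poly (q1 + q2) x" using q1 q2 by simp
  ultimately show ?thesis unfolding adjoin_def pin_def by blast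
qed

lemma adj_mult:
  assumes A: "is_subring A" and y: "y \<in> adjoin A x" and z: "z \<in> adjoin A x"
  shows "y * z \<in> adjoin A x"
proof -
  obtain q1 where q1: "pin A q1" "y = poly q1 x" using y unfolding adjoin_def pin_def by blast
  obtain q2 where q2: "pin A q2" "z = poly q2 x" using z unfolding adjoin_def pin_def by blast
  have "pin A (q1 * q2)" by (rule pin_mult[OF A q1(1) q2(1)])
  moreover have "y * z = poly (q1 * q2) x" using q1 q2 by simp
  ultimately show ?thesis unfolding adjoin_def pin_def by blast
qed

lemma adj_sum:
  assumes A: "is_subring A" and I: "finite I" and f: "\<And>i. i \<in> I \<Longrightarrow> f i \<in> adjoin A x"
  shows "sum f I \<in> adjoin A x"
  using I f
proof (induct I rule: finite_induct)
  case empty thus ?case using adj_const[OF A, of 0] A by (simp add: is_subring_def)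
next
  case (insert i I) thus ?case using adj_add[OF A] by simp
qed

lemma adj_pow: "is_subring A \<Longrightarrow> y \<in> adjoin A x \<Longrightarrow> y ^ n \<in> adjoin A x"
proof (induct n)
  case 0 thus ?case using adj_const[of A 1] by (simp add: is_subring_def)
next
  case (Suc n) thus ?case using adj_mult[of A] by simp
qed

lemma adj_sub: "is_subring A \<Longrightarrow> y \<in> adjoin A x \<Longrightarrow> adjoin A y \<subseteq> adjoin A x"
proof
  fix z assume A: "is_subring A" and y: "y \<in> adjoin A x" and z: "z \<in> adjoin A y"
  then obtain q where q: "\<forall>i. Polynomial.coeff q i \<in> A" "z = poly q y" unfolding adjoin_def by blast
  have "z = (\<Sum>i\<le>Polynomial.degree q. Polynomial.coeff q i * y ^ i)" using q(2) by (simp add: poly_altdef)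
  also have "\<dots> \<in> adjoin A x"
    apply (rule adj_sum[OF A finite_atMost])
    apply (rule adj_mult[OF A])
     apply (rule adj_const[OF A])
    using q(1) apply simp
    apply (rule adj_pow[OF A y])
    done
  finally show "z \<in> adjoin A x" .
qed

lemma sf_ops:
  assumes "is_subfield K" "x \<in> K" "y \<in> K"
  shows "x * y \<in> K" "x - y \<in> K" "x + y \<in> K" "x / y \<in> K" "1 \<in> K" "0 \<in> K"
proof -
  show "x * y \<in> K" "x - y \<in> K" "x + y \<in> K" "1 \<in> K" "0 \<in> K"
    using assms unfolding is_subfield_def is_subring_def by auto
  show "x / y \<in> K"
  proof (cases "y = 0")
    case True thus ?thesis using assms unfolding is_subfield_def is_subring_def by auto
  next
    case False thus ?thesis using assms unfolding is_subfield_def is_subring_def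
      by (auto simp: divide_inverse)
  qed
qed

lemma sr_ops:
  assumes "is_subring S" "x \<in> S" "y \<in> S"
  shows "x * y \<in> S" "x - y \<in> S" "x + y \<in> S" "1 \<in> S" "0 \<in> S"
  using assms unfolding is_subring_def by auto

hide_const (open) Divisibility.prime

theorem lemma5p3:
  fixes K Ov :: "'a::field_char_0 set" and p :: nat and \<zeta> \<alpha>1 \<alpha>2 \<gamma>1 \<gamma>2 :: 'a
  defines "A \<equiv> Ov \<inter> K"
      and "mA \<equiv> max_ideal Ov \<inter> K"
      and "B \<equiv> integral_closure (Ov \<inter> K)"
      and "\<zz> \<equiv> \<zeta> - 1"
  assumes K_field: "is_subfield K"
      and O_val: "is_valuation_ring Ov"
      and hens: "henselian A mA"
      and p_prime: "prime p"
      and res_char: "of_nat p \<in> mA"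
      and zeta: "\<zeta> \<in> K" "\<zeta> ^ p = 1" "\<forall>k. 0 < k \<and> k < p \<longrightarrow> \<zeta> ^ k \<noteq> 1"
      and kummer: "\<exists>\<alpha>. \<alpha> ^ p \<in> K \<and> gen_field K \<alpha> = UNIV"
      and degree: "ext_degree_is K p"
      and value_index_1: "\<forall>y. y \<noteq> 0 \<longrightarrow> (\<exists>x\<in>K. x \<noteq> 0 \<and> y / x \<in> units_in Ov)"
      and residue_trivial: "\<forall>y\<in>Ov. \<exists>x\<in>A. y - x \<in> max_ideal Ov"
      and a1: "\<alpha>1 \<in> kummer_gens K Ov p" and a2: "\<alpha>2 \<in> kummer_gens K Ov p"
      and g1: "\<gamma>1 \<in> A" "\<gamma>1 * (\<alpha>1 - 1) / \<zz> \<in> units_in B"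
      and g2: "\<gamma>2 \<in> A" "\<gamma>2 * (\<alpha>2 - 1) / \<zz> \<in> units_in B"
      and le: "val_le Ov (\<alpha>1 - 1) (\<alpha>2 - 1)"
  shows "adjoin A (\<gamma>1 * (\<alpha>1 - 1) / \<zz>) \<subseteq> adjoin A (\<gamma>2 * (\<alpha>2 - 1) / \<zz>)"
proof -
  have p2: "p \<ge> 2" using p_prime by (simp add: prime_ge_2_nat)
  hence p0: "p > 0" by simp
  have SK: "is_subring K" using K_field by (simp add: is_subfield_def)
  have SO: "is_subring Ov" using O_val by (rule VR_sub)
  have SA: "is_subring A" unfolding A_def using SK SO unfolding is_subring_def by auto
  obtain h1 where h1: "\<alpha>1^p = h1" "h1 \<in> units_in (Ov \<inter> K)" "gen_field K \<alpha>1 = UNIV"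
    using a1 unfolding kummer_gens_def by blast
  obtain h2 where h2: "\<alpha>2^p = h2" "h2 \<in> units_in (Ov \<inter> K)" "gen_field K \<alpha>2 = UNIV"
    using a2 unfolding kummer_gens_def by blast
  have h1': "h1 \<in> Ov" "h1 \<in> K" "h1 \<noteq> 0" "inverse h1 \<in> Ov" using h1(2) by (auto simp: units_in_def)
  have h2': "h2 \<in> Ov" "h2 \<in> K" "h2 \<noteq> 0" "inverse h2 \<in> Ov" using h2(2) by (auto simp: units_in_def)
  obtain d k where dK: "d \<in> K" and dk: "\<alpha>1 = d * \<alpha>2^k"
    using kummer_pair[OF K_field degree p0 zeta(1,2,3) h2(1) h2'(2) h2(3) h1(1) h1'(2) h1'(3)] by blast
  have a2O: "\<alpha>2 \<in> Ov" by (rule VR_pow[OF O_val p0]) (use h2 h2' in simp)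
  have a2iO: "inverse \<alpha>2 \<in> Ov" by (rule VR_pow[OF O_val p0]) (use h2 h2' in \<open>simp add: power_inverse\<close>)
  have a1O: "\<alpha>1 \<in> Ov" by (rule VR_pow[OF O_val p0]) (use h1 h1' in simp)
  have a2ne: "\<alpha>2 \<noteq> 0" using h2 h2' p0 by auto
  have "\<zeta> \<noteq> 1" using zeta(3) p2 by (metis One_nat_def less_le_trans less_numeral_extra(1) one_less_numeral_iff power_one_right semiring_norm(76))
  hence zne: "\<zz> \<noteq> 0" by (simp add: \<zz>_def)
  have zK: "\<zz> \<in> K" unfolding \<zz>_def using sf_ops(2)[OF K_field zeta(1) sf_ops(5)[OF K_field zeta(1) zeta(1)]] .
  have BO: "B \<subseteq> Ov" unfolding B_def using integral_in_VR[OF O_val] by blast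
  define u1 where "u1 = \<gamma>1 * (\<alpha>1 - 1) / \<zz>"
  define u2 where "u2 = \<gamma>2 * (\<alpha>2 - 1) / \<zz>"
  define x1 where "x1 = \<alpha>1 - 1"
  define x2 where "x2 = \<alpha>2 - 1"
  have u1O: "u1 \<in> Ov" using g1(2) BO unfolding u1_def units_in_def by auto
  have u2O: "u2 \<in> Ov" "inverse u2 \<in> Ov" "u2 \<noteq> 0" using g2(2) BO unfolding u2_def units_in_def by auto
  have g2ne: "\<gamma>2 \<noteq> 0" and x2ne: "x2 \<noteq> 0" using u2O(3) unfolding u2_def x2_def by auto
  have g1K: "\<gamma>1 \<in> K" and g2K: "\<gamma>2 \<in> K" using g1(1) g2(1) unfolding A_def by auto
  have x1O: "x1 \<in> Ov" and x2O: "x2 \<in> Ov" unfolding x1_def x2_def using sr_ops(2,4)[OF SO] a1O a2O by auto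
  show "adjoin A (\<gamma>1 * (\<alpha>1 - 1) / \<zz>) \<subseteq> adjoin A (\<gamma>2 * (\<alpha>2 - 1) / \<zz>)"
    unfolding u1_def[symmetric] u2_def[symmetric]
  proof (rule adj_sub[OF SA])
    show "u1 \<in> adjoin A u2"
    proof (cases "x1 = 0")
      case True
      hence "u1 = 0" unfolding u1_def x1_def by simp
      thus ?thesis using adj_const[OF SA, of 0 u2] SA by (simp add: is_subring_def)
    next
      case False
      have r: "x2 / x1 \<in> Ov" using le False unfolding val_le_def x1_def x2_def by simp
      define s where "s = (\<Sum>j<k. \<alpha>2^j)"
      have hs: "\<alpha>2^k - 1 = x2 * s" unfolding s_def x2_def by (rule power_diff_1_eq)
      define e where "e = \<zz> / \<gamma>2"
      have e_eq: "e = x2 * inverse u2" unfolding e_def u2_def x2_def using g2ne zne x2ne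
        by (simp add: field_simps x2_def[symmetric])
      have eA: "e \<in> A" unfolding A_def
        using sf_ops(4)[OF K_field zK g2K] sr_ops(1)[OF SO x2O u2O(2)] e_eq e_def by auto
      have a2e: "\<alpha>2 = 1 + e * u2" unfolding e_def u2_def using g2ne zne by (simp add: field_simps)
      have a2adj: "\<alpha>2 \<in> adjoin A u2" unfolding a2e
        using SA by (intro adj_add[OF SA] adj_mult[OF SA] adj_const[OF SA] adj_x[OF SA] eA) (simp add: is_subring_def)
      have sadj: "s \<in> adjoin A u2" unfolding s_def
        by (intro adj_sum[OF SA] finite_lessThan adj_pow[OF SA a2adj])
      define g where "g = \<gamma>1 / \<gamma>2"
      have g_eq: "g = u1 * inverse u2 * (x2 / x1)" unfolding g_def u1_def u2_def
        using g2ne zne x2ne False by (simp add: field_simps x1_def[symmetric] x2_def[symmetric])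
      have gA: "g \<in> A" unfolding A_def
        using sf_ops(4)[OF K_field g1K g2K] sr_ops(1)[OF SO sr_ops(1)[OF SO u1O u2O(2)] r] g_eq g_def by auto
      have dO: "d = \<alpha>1 * (inverse \<alpha>2)^k" using dk a2ne by (simp add: power_inverse field_simps)
      have dA: "d \<in> A" unfolding A_def using dK dO sr_ops(1)[OF SO a1O subring_pow[OF SO a2iO]] by auto
      define c0 where "c0 = \<gamma>1 * (d - 1) / \<zz>"
      have xs: "x1 - x2 * s = (d - 1) * \<alpha>2^k" using hs dk unfolding x1_def x2_def by (simp add: algebra_simps)
      have c0_eq: "c0 = u1 * ((1 - (x2 / x1) * s) * (inverse \<alpha>2)^k)"
      proof -
        have "u1 * ((1 - (x2 / x1) * s) * (inverse \<alpha>2)^k) = \<gamma>1 * (x1 - x2 * s) / (\<zz> * \<alpha>2^k)"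
          unfolding u1_def x1_def[symmetric] using False a2ne zne by (simp add: field_simps power_inverse)
        also have "\<dots> = c0" unfolding xs c0_def using a2ne zne by (simp add: field_simps)
        finally show ?thesis ..
      qed
      have c0K: "c0 \<in> K" unfolding c0_def
        by (intro sf_ops(4)[OF K_field _ zK] sf_ops(1)[OF K_field g1K] sf_ops(2)[OF K_field dK] sf_ops(5)[OF K_field dK dK])
      have oneO: "1 \<in> Ov" using SO by (simp add: is_subring_def)
      have sO: "s \<in> Ov" unfolding s_def
        by (rule subring_sum[OF SO finite_lessThan subring_pow[OF SO a2O]])
      have c0O: "c0 \<in> Ov" unfolding c0_eq
        by (rule sr_ops(1)[OF SO u1O sr_ops(1)[OF SO sr_ops(2)[OF SO oneO sr_ops(1)[OF SO r sO]] subring_pow[OF SO a2iO]]])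
      have key: "u1 = c0 + d * g * u2 * s"
      proof -
        have "d * g * u2 * s = d * (\<gamma>1 * x2 / \<zz>) * s" unfolding g_def u2_def x2_def using g2ne zne by (simp add: field_simps)
        hence "c0 + d * g * u2 * s = \<gamma>1 / \<zz> * ((d - 1) + d * (x2 * s))" unfolding c0_def using zne by (simp add: field_simps)
        also have "\<dots> = \<gamma>1 / \<zz> * x1" unfolding hs[symmetric] x1_def dk by (simp add: algebra_simps)
        also have "\<dots> = u1" unfolding u1_def x1_def by simp
        finally show ?thesis ..
      qed
      show ?thesis unfolding key
        by (intro adj_add[OF SA] adj_mult[OF SA] adj_const[OF SA] adj_x[OF SA] sadj gA dA)
          (simp add: A_def c0K c0O)
    qed
  qed
qed

end
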